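(* Let $V$ be an $n$-dimensional complex vector space, $V^*$ its dual, $\Lambda_2(V)$ the second antisymmetric tensor of $V$ and $S_2(V^* )$ the second symmetric tensor of $V^*$. Then the algebra of $GL(V)$-invariants in the exterior algebra $\Lambda(\Lambda_2(V)\oplus S_2(V^* ))$ is trivial: $\Lambda(\Lambda_2(V)\oplus S_2(V^* ))^{GL(V)}=\mathbb{C}1$.
   Context: $GL(V)$ acts naturally on $\Lambda_2(V)\oplus S_2(V^* )$ and hence on the exterior algebra $\Lambda(\Lambda_2(V)\oplus S_2(V^* ))$ by algebra automorphisms. *)

theory Defs
  imports "HOL-Analysis.Analysis"
begin

text \<open>
  V = complex^'n (dimension n = CARD('n)), with standard basis e_i and dual basis f_i of V*.
  W = Lambda_2(V) (+) S_2(V*) is realised inside (V (x) V) (+) (V* (x) V*):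
  a tensor index of W is  Inl (i,j)  (coordinate of e_i (x) e_j, antisymmetric in (i,j))
  or  Inr (i,j)  (coordinate of f_i (x) f_j, symmetric in (i,j)).
\<close>

type_synonym 'n widx = "('n \<times> 'n) + ('n \<times> 'n)"

text \<open>Matrix coefficients of the natural action of g in GL(V) on (V (x) V) (+) (V* (x) V*):
  g acts on V by g and on V* by the contragredient transpose (g^-1).\<close>
definition rhoW :: "complex^'n^'n \<Rightarrow> 'n widx \<Rightarrow> 'n widx \<Rightarrow> complex" where
  "rhoW g b c = (case (b, c) of
      (Inl (i, j), Inl (k, l)) \<Rightarrow> g $ i $ k * g $ j $ l
    | (Inr (i, j), Inr (k, l)) \<Rightarrow>
        transpose (matrix_inv g) $ i $ k * transpose (matrix_inv g) $ j $ l
    | _ \<Rightarrow> 0)"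

fun flipW :: "'n widx \<Rightarrow> 'n widx" where
  "flipW (Inl (i, j)) = Inl (j, i)"
| "flipW (Inr (i, j)) = Inr (j, i)"

fun flipsign :: "'n widx \<Rightarrow> complex" where
  "flipsign (Inl _) = -1"
| "flipsign (Inr _) = 1"

text \<open>
  An element of the exterior algebra Lambda(W), realised (char 0) as the space of alternating
  tensors in the tensor algebra  (+)_k W^(x)k.  It is given by its coordinate function
  x :: 'n widx list => complex; the degree-k component is x restricted to lists of length k.
  Conditions: each slot lies in W (antisymmetric on Lambda_2(V)-slots, symmetric on
  S_2(V*)-slots), and x is alternating in the slots.
\<close>
definition ext_alg_elem :: "('n widx list \<Rightarrow> complex) \<Rightarrow> bool" where
  "ext_alg_elem x \<longleftrightarrow>
     (\<forall>xs b ys. x (xs @ [flipW b] @ ys) = flipsign b * x (xs @ [b] @ ys)) \<and>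
     (\<forall>xs b c ys. x (xs @ [b, c] @ ys) = - x (xs @ [c, b] @ ys))"

definition ext_act :: "complex^'n^'n \<Rightarrow> ('n widx list \<Rightarrow> complex) \<Rightarrow> ('n widx list \<Rightarrow> complex)" where
  "ext_act g x = (\<lambda>bs. \<Sum>cs \<in> {cs. length cs = length bs}.
      (\<Prod>m<length bs. rhoW g (bs ! m) (cs ! m)) * x cs)"

definition ext_one :: "'n widx list \<Rightarrow> complex" where
  "ext_one = (\<lambda>bs. if bs = [] then 1 else 0)"

end

theory Submission
  imports Defs "HOL-Analysis.Analysis"
begin

fun isL :: "'n widx \<Rightarrow> bool" where
  "isL (Inl _) = True" | "isL (Inr _) = False"

fun cmp :: "'n widx \<Rightarrow> bool \<Rightarrow> 'n" where
  "cmp (Inl (i,j)) s = (if s then j else i)"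
| "cmp (Inr (i,j)) s = (if s then j else i)"

fun setc :: "'n widx \<Rightarrow> bool \<Rightarrow> 'n \<Rightarrow> 'n widx" where
  "setc (Inl (i,j)) s v = (if s then Inl (i,v) else Inl (v,j))"
| "setc (Inr (i,j)) s v = (if s then Inr (i,v) else Inr (v,j))"

definition Op :: "('n widx \<Rightarrow> bool) \<Rightarrow> 'n \<Rightarrow> 'n \<Rightarrow> ('n widx list \<Rightarrow> complex) \<Rightarrow> 'n widx list \<Rightarrow> complex" where
  "Op P a b y bs = (\<Sum>m<length bs. \<Sum>s\<in>UNIV. if P (bs!m) \<and> cmp (bs!m) s = a then y (bs[m := setc (bs!m) s b]) else 0)"

lemma isL_setc[simp]: "isL (setc w s v) = isL w"
  by (cases w) (auto split: if_splits)

lemma setc_comp[simp]: "setc w s (cmp w s) = w"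
  by (cases w) (auto split: if_splits)

lemma setc_setc[simp]: "setc (setc w s b) s c = setc w s c"
  by (cases w) (auto split: if_splits)

lemma comp_setc: "cmp (setc w s b) s' = (if s' = s then b else cmp w s')"
  by (cases w) (auto split: if_splits)

lemma flip_setc: "s' \<noteq> s \<Longrightarrow> setc (setc w s (cmp w s')) s' (cmp w s) = flipW w"
  by (cases w) (auto split: if_splits)

lemma flip_lemma:
  assumes "ext_alg_elem y" "m < length bs"
  shows "y (bs[m := flipW c]) = flipsign c * y (bs[m := c])"
proof -
  have "bs[m := flipW c] = take m bs @ [flipW c] @ drop (Suc m) bs"
       "bs[m := c] = take m bs @ [c] @ drop (Suc m) bs"
    using assms(2) by (simp_all only: upd_conv_take_nth_drop append.simps)
  moreover have "y (take m bs @ [flipW c] @ drop (Suc m) bs) = flipsign c * y (take m bs @ [c] @ drop (Suc m) bs)"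
    using assms(1) unfolding ext_alg_elem_def by blast
  ultimately show ?thesis by simp
qed

lemma swap_gen:
  assumes "ext_alg_elem y"
  shows "y (xs @ [b] @ ms @ [c] @ ys) = - y (xs @ [c] @ ms @ [b] @ ys)"
proof (induction ms arbitrary: xs)
  case Nil
  have "y (xs @ [b, c] @ ys) = - y (xs @ [c, b] @ ys)" using assms unfolding ext_alg_elem_def by blast
  then show ?case by simp
next
  case (Cons m ms)
  have A: "\<And>xs b c ys. y (xs @ [b, c] @ ys) = - y (xs @ [c, b] @ ys)"
    using assms unfolding ext_alg_elem_def by blast
  have "y (xs @ [b] @ (m # ms) @ [c] @ ys) = - y (xs @ [m, b] @ ms @ [c] @ ys)"
    using A[of xs b m "ms @ [c] @ ys"] by simp
  also have "\<dots> = - y ((xs @ [m]) @ [b] @ ms @ [c] @ ys)" by simp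
  also have "\<dots> = y ((xs @ [m]) @ [c] @ ms @ [b] @ ys)" unfolding Cons[of "xs @ [m]"] by simp
  also have "\<dots> = y (xs @ [m, c] @ ms @ [b] @ ys)" by simp
  also have "\<dots> = - y (xs @ [c, m] @ ms @ [b] @ ys)" by (rule A)
  finally show ?case by simp
qed

lemma swap_lemma_lt:
  assumes "ext_alg_elem y" "m < m'" "m' < length bs"
  shows "y (bs[m := c, m' := d]) = - y (bs[m := d, m' := c])"
proof -
  define xs where "xs = take m bs"
  define ms where "ms = take (m' - m - 1) (drop (Suc m) bs)"
  define ys where "ys = drop (Suc m') bs"
  have e: "\<And>u v. bs[m := u, m' := v] = xs @ [u] @ ms @ [v] @ ys"
    unfolding xs_def ms_def ys_def using assms(2,3)
    by (auto simp: list_eq_iff_nth_eq nth_append nth_list_update min_def)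
  show ?thesis unfolding e by (rule swap_gen[OF assms(1)])
qed

lemma swap_lemma:
  assumes "ext_alg_elem y" "m \<noteq> m'" "m < length bs" "m' < length bs"
  shows "y (bs[m := c, m' := d]) = - y (bs[m := d, m' := c])"
proof (cases "m < m'")
  case True then show ?thesis using swap_lemma_lt[OF assms(1)] assms by blast
next
  case False
  then have "m' < m" using assms by simp
  then have "y (bs[m' := d, m := c]) = - y (bs[m' := c, m := d])"
    using swap_lemma_lt[OF assms(1)] assms by blast
  then show ?thesis using assms(2) by (simp add: list_update_swap)
qed


lemma cross_lemma:
  assumes y: "ext_alg_elem y" and mm: "m \<noteq> m'" "m < length bs" "m' < length bs"
    and k: "isL (bs!m) = isL (bs!m')"
  shows "(\<Sum>s\<in>UNIV. \<Sum>s'\<in>UNIV. y (bs[m := setc (bs!m) s (cmp (bs!m') s'), m' := setc (bs!m') s' (cmp (bs!m) s)])) = 0"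
proof -
  have sw: "\<And>c d. y (bs[m := c, m' := d]) = - y (bs[m := d, m' := c])"
    using swap_lemma[OF y mm] .
  have fl: "\<And>c d. y (bs[m := flipW c, m' := flipW d]) = flipsign c * flipsign d * y (bs[m := c, m' := d])"
  proof -
    fix c d
    have "y (bs[m := flipW c, m' := flipW d]) = y ((bs[m' := flipW d])[m := flipW c])"
      using mm(1) by (simp add: list_update_swap)
    also have "\<dots> = flipsign c * y ((bs[m' := flipW d])[m := c])"
      by (rule flip_lemma[OF y]) (use mm in simp)
    also have "(bs[m' := flipW d])[m := c] = (bs[m := c])[m' := flipW d]"
      using mm(1) by (simp add: list_update_swap)
    also have "y \<dots> = flipsign d * y ((bs[m := c])[m' := d])"
      by (rule flip_lemma[OF y]) (use mm in simp)
    finally show "?thesis c d" by simp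
  qed
  consider (LL) i j k l where "bs!m = Inl (i,j)" "bs!m' = Inl (k,l)"
    | (RR) i j k l where "bs!m = Inr (i,j)" "bs!m' = Inr (k,l)"
    using k by (cases "bs!m"; cases "bs!m'") (auto split: prod.splits)
  then show ?thesis
  proof cases
    case (LL i j k l)
    have 1: "y (bs[m := Inl (l, j), m' := Inl (k, i)]) = y (bs[m := Inl (j, l), m' := Inl (i, k)])"
      using fl[of "Inl (j,l)" "Inl (i,k)"] by simp
    show ?thesis using LL by (simp add: UNIV_bool 1 sw[of "Inl (i,l)"] sw[of "Inl (j,l)"])
  next
    case (RR i j k l)
    have 1: "y (bs[m := Inr (l, j), m' := Inr (k, i)]) = y (bs[m := Inr (j, l), m' := Inr (i, k)])"
      using fl[of "Inr (j,l)" "Inr (i,k)"] by simp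
    show ?thesis using RR by (simp add: UNIV_bool 1 sw[of "Inr (i,l)"] sw[of "Inr (j,l)"])
  qed
qed


lemma V_lemma:
  fixes bs :: "'n::finite widx list"
  assumes Pinv: "\<forall>w s v. P (setc w s v) = P w" and y: "ext_alg_elem y"
    and f0: "\<forall>w. P w \<longrightarrow> flipsign w = f0"
    and mm: "m < length bs" "m' < length bs" and Pm: "P (bs!m)"
  shows "(\<Sum>b\<in>UNIV. if P ((bs[m := setc (bs!m) s b])!m') \<and> cmp ((bs[m := setc (bs!m) s b])!m') s' = b
            then y ((bs[m := setc (bs!m) s b])[m' := setc ((bs[m := setc (bs!m) s b])!m') s' (cmp (bs!m) s)]) else 0)
   = (if m' = m then (if s' = s then of_nat CARD('n) * y bs else f0 * y bs)
      else if P (bs!m') then y (bs[m := setc (bs!m) s (cmp (bs!m') s'), m' := setc (bs!m') s' (cmp (bs!m) s)]) else 0)"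
proof (cases "m' = m")
  case True
  show ?thesis
  proof (cases "s' = s")
    case True
    with \<open>m' = m\<close> show ?thesis using mm Pm Pinv by (simp add: comp_setc)
  next
    case False
    have "(\<Sum>b\<in>UNIV. if P ((bs[m := setc (bs!m) s b])!m') \<and> cmp ((bs[m := setc (bs!m) s b])!m') s' = b
            then y ((bs[m := setc (bs!m) s b])[m' := setc ((bs[m := setc (bs!m) s b])!m') s' (cmp (bs!m) s)]) else 0)
        = (\<Sum>b\<in>UNIV. if cmp (bs!m) s' = b then y (bs[m := setc (setc (bs!m) s b) s' (cmp (bs!m) s)]) else 0)"
      using \<open>m' = m\<close> False mm Pm Pinv by (intro sum.cong) (auto simp: comp_setc)
    also have "\<dots> = y (bs[m := flipW (bs!m)])"
      using False by (simp add: flip_setc)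
    also have "\<dots> = f0 * y bs"
      using flip_lemma[OF y mm(1), of "bs!m"] f0 Pm by simp
    finally show ?thesis using \<open>m' = m\<close> False by simp
  qed
next
  case False
  have "(\<Sum>b\<in>UNIV. if P ((bs[m := setc (bs!m) s b])!m') \<and> cmp ((bs[m := setc (bs!m) s b])!m') s' = b
            then y ((bs[m := setc (bs!m) s b])[m' := setc ((bs[m := setc (bs!m) s b])!m') s' (cmp (bs!m) s)]) else 0)
        = (\<Sum>b\<in>UNIV. if cmp (bs!m') s' = b then (if P (bs!m') then y (bs[m := setc (bs!m) s b, m' := setc (bs!m') s' (cmp (bs!m) s)]) else 0) else 0)"
    using False mm by (intro sum.cong) auto
  also have "\<dots> = (if P (bs!m') then y (bs[m := setc (bs!m) s (cmp (bs!m') s'), m' := setc (bs!m') s' (cmp (bs!m) s)]) else 0)"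
    by simp
  finally show ?thesis using False by simp
qed

lemma sum_if_eq_pull:
  fixes H :: "'a::finite \<Rightarrow> 'b \<Rightarrow> complex"
  shows "(\<Sum>a\<in>(UNIV::'a set). \<Sum>b\<in>B. if Q \<and> c = a then H a b else 0) = (if Q then \<Sum>b\<in>B. H c b else 0)"
proof -
  have "(\<Sum>a\<in>(UNIV::'a set). \<Sum>b\<in>B. if Q \<and> c = a then H a b else 0)
      = (\<Sum>a\<in>(UNIV::'a set). if c = a then (if Q then \<Sum>b\<in>B. H a b else 0) else 0)"
    by (intro sum.cong) auto
  also have "\<dots> = (if Q then \<Sum>b\<in>B. H c b else 0)" by simp
  finally show ?thesis .
qed

lemma casimir:
  fixes bs :: "'n::finite widx list"
  assumes Pinv: "\<forall>w s v. P (setc w s v) = P w" and y: "ext_alg_elem y"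
    and f0: "\<forall>w. P w \<longrightarrow> flipsign w = f0"
    and Pk: "\<forall>w w'. P w \<longrightarrow> P w' \<longrightarrow> isL w = isL w'"
  shows "(\<Sum>a\<in>UNIV. \<Sum>b\<in>UNIV. Op P a b (Op P b a y) bs)
     = 2 * of_nat (card {m. m < length bs \<and> P (bs!m)}) * (of_nat CARD('n) + f0) * y bs"
proof -
  define N where "N = length bs"
  define K where "K = (\<lambda>m s b. bs[m := setc (bs!m) s b])"
  define X where "X = (\<lambda>m s m' s'. (if m' = m then (if s' = s then of_nat CARD('n) * y bs else f0 * y bs)
      else if P (bs!m') then y (bs[m := setc (bs!m) s (cmp (bs!m') s'), m' := setc (bs!m') s' (cmp (bs!m) s)]) else 0))"
  have lenK: "length (K m s b) = N" for m s b by (simp add: K_def N_def)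
  have "(\<Sum>a\<in>UNIV. \<Sum>b\<in>UNIV. Op P a b (Op P b a y) bs)
      = (\<Sum>a\<in>UNIV. \<Sum>b\<in>UNIV. \<Sum>m<N. \<Sum>s\<in>UNIV. if P (bs!m) \<and> cmp (bs!m) s = a then Op P b a y (K m s b) else 0)"
    unfolding K_def N_def by (simp add: Op_def[of P _ _ "Op P _ _ y"])
  also have "\<dots> = (\<Sum>m<N. \<Sum>s\<in>UNIV. \<Sum>a\<in>UNIV. \<Sum>b\<in>UNIV. if P (bs!m) \<and> cmp (bs!m) s = a then Op P b a y (K m s b) else 0)"
    by (simp add: sum.swap[of _ UNIV "{..<N}"] sum.swap[of _ UNIV "UNIV::bool set"])
  also have "\<dots> = (\<Sum>m<N. \<Sum>s\<in>UNIV. if P (bs!m) then \<Sum>b\<in>UNIV. Op P b (cmp (bs!m) s) y (K m s b) else 0)"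
    by (simp only: sum_if_eq_pull)
  also have "\<dots> = (\<Sum>m<N. \<Sum>s\<in>UNIV. if P (bs!m) then \<Sum>m'<N. \<Sum>s'\<in>UNIV. X m s m' s' else 0)"
  proof (intro sum.cong refl)
    fix m s assume m: "m \<in> {..<N}"
    show "(if P (bs!m) then \<Sum>b\<in>UNIV. Op P b (cmp (bs!m) s) y (K m s b) else 0)
        = (if P (bs!m) then \<Sum>m'<N. \<Sum>s'\<in>UNIV. X m s m' s' else 0)"
    proof (cases "P (bs!m)")
      case True
      have "(\<Sum>b\<in>UNIV. Op P b (cmp (bs!m) s) y (K m s b))
         = (\<Sum>b\<in>UNIV. \<Sum>m'<N. \<Sum>s'\<in>UNIV. if P (K m s b!m') \<and> cmp (K m s b!m') s' = b then y ((K m s b)[m' := setc (K m s b!m') s' (cmp (bs!m) s)]) else 0)"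
        by (simp add: Op_def lenK)
      also have "\<dots> = (\<Sum>m'<N. \<Sum>s'\<in>UNIV. \<Sum>b\<in>UNIV. if P (K m s b!m') \<and> cmp (K m s b!m') s' = b then y ((K m s b)[m' := setc (K m s b!m') s' (cmp (bs!m) s)]) else 0)"
        by (simp add: sum.swap[of _ UNIV "{..<N}"] sum.swap[of _ UNIV "UNIV::bool set"])
      also have "\<dots> = (\<Sum>m'<N. \<Sum>s'\<in>UNIV. X m s m' s')"
        unfolding K_def X_def using V_lemma[OF Pinv y f0] m True by (simp add: N_def)
      finally show ?thesis using True by simp
    qed simp
  qed
  also have "\<dots> = (\<Sum>m<N. if P (bs!m) then 2 * (of_nat CARD('n) + f0) * y bs else 0)"
  proof (intro sum.cong refl)
    fix m assume m: "m \<in> {..<N}"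
    show "(\<Sum>s\<in>UNIV. if P (bs!m) then \<Sum>m'<N. \<Sum>s'\<in>UNIV. X m s m' s' else 0) = (if P (bs!m) then 2 * (of_nat CARD('n) + f0) * y bs else 0)"
    proof (cases "P (bs!m)")
      case True
      have split: "(\<Sum>m'<N. \<Sum>s'\<in>UNIV. X m s m' s') = (\<Sum>s'\<in>UNIV. X m s m s') + (\<Sum>m'\<in>{..<N}-{m}. \<Sum>s'\<in>UNIV. X m s m' s')" for s
        using m sum.remove[of "{..<N}" m "\<lambda>m'. \<Sum>s'\<in>UNIV. X m s m' s'"] by simp
      have d: "(\<Sum>s'\<in>UNIV. X m s m s') = (of_nat CARD('n) + f0) * y bs" for s
        by (cases s) (simp_all add: X_def UNIV_bool algebra_simps)
      have z: "(\<Sum>s\<in>UNIV. \<Sum>m'\<in>{..<N}-{m}. \<Sum>s'\<in>UNIV. X m s m' s') = 0"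
      proof -
        have "(\<Sum>s\<in>UNIV. \<Sum>m'\<in>{..<N}-{m}. \<Sum>s'\<in>UNIV. X m s m' s') = (\<Sum>m'\<in>{..<N}-{m}. \<Sum>s\<in>UNIV. \<Sum>s'\<in>UNIV. X m s m' s')"
          by (rule sum.swap)
        also have "\<dots> = (\<Sum>m'\<in>{..<N}-{m}. 0)"
        proof (intro sum.cong refl)
          fix m' assume m': "m' \<in> {..<N}-{m}"
          show "(\<Sum>s\<in>UNIV. \<Sum>s'\<in>UNIV. X m s m' s') = 0"
          proof (cases "P (bs!m')")
            case True
            then have "isL (bs!m) = isL (bs!m')" using Pk \<open>P (bs!m)\<close> by blast
            then show ?thesis using m' m True cross_lemma[OF y, of m m' bs] by (simp add: X_def N_def)
          qed (use m' in \<open>simp add: X_def\<close>)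
        qed
        finally show ?thesis by simp
      qed
      have "(\<Sum>s\<in>UNIV. \<Sum>m'<N. \<Sum>s'\<in>UNIV. X m s m' s')
          = (\<Sum>s\<in>UNIV. (of_nat CARD('n) + f0) * y bs + (\<Sum>m'\<in>{..<N}-{m}. \<Sum>s'\<in>UNIV. X m s m' s'))"
        by (simp only: split d)
      also have "\<dots> = (\<Sum>s\<in>(UNIV::bool set). (of_nat CARD('n) + f0) * y bs) + 0"
        by (simp only: sum.distrib z)
      also have "\<dots> = 2 * (of_nat CARD('n) + f0) * y bs" by (simp add: UNIV_bool)
      finally show ?thesis using True by simp
    qed simp
  qed
  also have "\<dots> = of_nat (card {m. m < length bs \<and> P (bs!m)}) * (2 * (of_nat CARD('n) + f0) * y bs)"
  proof -
    have "{m. m < length bs \<and> P (bs!m)} = {m \<in> {..<N}. P (bs!m)}" by (auto simp: N_def)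
    then show ?thesis by (simp add: sum.inter_filter[symmetric])
  qed
  finally show ?thesis by (simp add: algebra_simps)
qed


lemma NF1:
  assumes disj: "\<forall>w. \<not> (P w \<and> Q w)" and Pinv: "\<forall>w s v. P (setc w s v) = P w"
    and m: "m < length bs"
  shows "(if P (bs!m) \<and> cmp (bs!m) s = a then Op Q c d y (bs[m := setc (bs!m) s b]) else 0)
     = (\<Sum>m'<length bs. \<Sum>s'\<in>UNIV.
     if P (bs!m) \<and> cmp (bs!m) s = a \<and> Q (bs!m') \<and> cmp (bs!m') s' = c
     then y (bs[m := setc (bs!m) s b, m' := setc (bs!m') s' d]) else 0)"
proof (cases "P (bs!m) \<and> cmp (bs!m) s = a")
  case True
  have "Op Q c d y (bs[m := setc (bs!m) s b]) = (\<Sum>m'<length bs. \<Sum>s'\<in>UNIV.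
     if P (bs!m) \<and> cmp (bs!m) s = a \<and> Q (bs!m') \<and> cmp (bs!m') s' = c
     then y (bs[m := setc (bs!m) s b, m' := setc (bs!m') s' d]) else 0)"
    unfolding Op_def length_list_update
  proof (rule sum.cong[OF refl], rule sum.cong[OF refl])
    fix m' s' assume m': "m' \<in> {..<length bs}"
    show "(if Q (bs[m := setc (bs!m) s b] ! m') \<and> cmp (bs[m := setc (bs!m) s b] ! m') s' = c
        then y (bs[m := setc (bs!m) s b, m' := setc (bs[m := setc (bs!m) s b] ! m') s' d]) else 0) =
       (if P (bs!m) \<and> cmp (bs!m) s = a \<and> Q (bs!m') \<and> cmp (bs!m') s' = c
        then y (bs[m := setc (bs!m) s b, m' := setc (bs!m') s' d]) else 0)"
    proof (cases "m' = m")
      case True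
      then show ?thesis using m disj Pinv \<open>P (bs!m) \<and> cmp (bs!m) s = a\<close> by auto
    next
      case False
      then show ?thesis using \<open>P (bs!m) \<and> cmp (bs!m) s = a\<close> by simp
    qed
  qed
  then show ?thesis using True by simp
next
  case False
  then show ?thesis by (auto intro!: sum.neutral)
qed

lemma NF:
  assumes disj: "\<forall>w. \<not> (P w \<and> Q w)" and Pinv: "\<forall>w s v. P (setc w s v) = P w"
  shows "Op P a b (Op Q c d y) bs = (\<Sum>m<length bs. \<Sum>s\<in>UNIV. \<Sum>m'<length bs. \<Sum>s'\<in>UNIV.
     if P (bs!m) \<and> cmp (bs!m) s = a \<and> Q (bs!m') \<and> cmp (bs!m') s' = c
     then y (bs[m := setc (bs!m) s b, m' := setc (bs!m') s' d]) else 0)"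
  unfolding Op_def[of P]
  by (rule sum.cong[OF refl], rule sum.cong[OF refl], rule NF1[OF disj Pinv]) simp

lemma commute:
  assumes disj: "\<forall>w. \<not> (P w \<and> Q w)" and Pinv: "\<forall>w s v. P (setc w s v) = P w"
    and Qinv: "\<forall>w s v. Q (setc w s v) = Q w"
  shows "Op P a b (Op Q c d y) bs = Op Q c d (Op P a b y) bs"
proof -
  have disj': "\<forall>w. \<not> (Q w \<and> P w)" using disj by blast
  define F where "F = (\<lambda>m s m' s'. if P (bs!m) \<and> cmp (bs!m) s = a \<and> Q (bs!m') \<and> cmp (bs!m') s' = c
     then y (bs[m := setc (bs!m) s b, m' := setc (bs!m') s' d]) else 0)"
  have "Op Q c d (Op P a b y) bs = (\<Sum>m'<length bs. \<Sum>s'\<in>UNIV. \<Sum>m<length bs. \<Sum>s\<in>UNIV. F m s m' s')"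
    unfolding NF[OF disj' Qinv] F_def
  proof (intro sum.cong refl)
    fix m' s' m s
    show "(if Q (bs!m') \<and> cmp (bs!m') s' = c \<and> P (bs!m) \<and> cmp (bs!m) s = a
      then y (bs[m' := setc (bs!m') s' d, m := setc (bs!m) s b]) else 0) =
      (if P (bs!m) \<and> cmp (bs!m) s = a \<and> Q (bs!m') \<and> cmp (bs!m') s' = c
      then y (bs[m := setc (bs!m) s b, m' := setc (bs!m') s' d]) else 0)"
    proof (cases "P (bs!m) \<and> Q (bs!m')")
      case True
      then have "m \<noteq> m'" using disj by blast
      then show ?thesis by (auto simp: list_update_swap)
    qed auto
  qed
  also have "\<dots> = (\<Sum>m'<length bs. \<Sum>m<length bs. \<Sum>s'\<in>UNIV. \<Sum>s\<in>UNIV. F m s m' s')"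
    by (rule sum.cong[OF refl], rule sum.swap)
  also have "\<dots> = (\<Sum>m<length bs. \<Sum>m'<length bs. \<Sum>s'\<in>UNIV. \<Sum>s\<in>UNIV. F m s m' s')"
    by (rule sum.swap)
  also have "\<dots> = (\<Sum>m<length bs. \<Sum>m'<length bs. \<Sum>s\<in>UNIV. \<Sum>s'\<in>UNIV. F m s m' s')"
    by (rule sum.cong[OF refl], rule sum.cong[OF refl], rule sum.swap)
  also have "\<dots> = (\<Sum>m<length bs. \<Sum>s\<in>UNIV. \<Sum>m'<length bs. \<Sum>s'\<in>UNIV. F m s m' s')"
    by (rule sum.cong[OF refl], rule sum.swap)
  finally show ?thesis unfolding NF[OF disj Pinv] F_def by simp
qed

lemma trace:
  fixes bs :: "'n::finite widx list"
  shows "(\<Sum>a\<in>UNIV. Op P a a y bs) = 2 * of_nat (card {m. m < length bs \<and> P (bs!m)}) * y bs"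
proof -
  have "(\<Sum>a\<in>UNIV. Op P a a y bs) = (\<Sum>a\<in>UNIV. \<Sum>m<length bs. \<Sum>s\<in>UNIV. if cmp (bs!m) s = a then (if P (bs!m) then y bs else 0) else 0)"
    unfolding Op_def by (intro sum.cong refl) auto
  also have "\<dots> = (\<Sum>m<length bs. \<Sum>s\<in>UNIV. \<Sum>a\<in>UNIV. if cmp (bs!m) s = a then (if P (bs!m) then y bs else 0) else 0)"
    by (subst sum.swap, rule sum.cong[OF refl], rule sum.swap)
  also have "\<dots> = (\<Sum>m<length bs. if P (bs!m) then 2 * y bs else 0)"
    by (simp add: UNIV_bool; intro sum.cong refl; simp)
  also have "\<dots> = of_nat (card {m. m < length bs \<and> P (bs!m)}) * (2 * y bs)"
  proof -
    have "{m. m < length bs \<and> P (bs!m)} = {m \<in> {..<length bs}. P (bs!m)}" by auto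
    then show ?thesis by (simp add: sum.inter_filter[symmetric])
  qed
  finally show ?thesis by (simp add: algebra_simps)
qed


definition ge :: "'n \<Rightarrow> 'n \<Rightarrow> complex \<Rightarrow> 'n \<Rightarrow> 'n \<Rightarrow> complex" where
  "ge a b t i k = (if i = k then 1 else 0) + t * (if i = a \<and> k = b then 1 else 0)"

definition uu :: "'n \<Rightarrow> 'n \<Rightarrow> complex \<Rightarrow> complex" where
  "uu a b t = (if a = b then - t / (1 + t) else - t)"

definition he :: "'n \<Rightarrow> 'n \<Rightarrow> complex \<Rightarrow> 'n \<Rightarrow> 'n \<Rightarrow> complex" where
  "he a b t i k = (if i = k then 1 else 0) + uu a b t * (if k = a \<and> i = b then 1 else 0)"

definition gm :: "'n::finite \<Rightarrow> 'n \<Rightarrow> complex \<Rightarrow> complex^'n^'n" where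
  "gm a b t = (\<chi> i k. ge a b t i k)"

definition gi :: "'n::finite \<Rightarrow> 'n \<Rightarrow> complex \<Rightarrow> complex^'n^'n" where
  "gi a b t = (\<chi> i k. (if i = k then 1 else 0) + uu a b t * (if i = a \<and> k = b then 1 else 0))"

lemma uu_rel: "t \<noteq> -1 \<Longrightarrow> t + uu a b t + (if a = b then t * uu a b t else 0) = 0"
proof -
  assume t: "t \<noteq> -1"
  then have "1 + t \<noteq> 0" by (metis add.commute add_eq_0_iff)
  then have "- t / (1 + t) + t * (- t / (1 + t)) = - t * (1 + t) / (1 + t)"
    by (simp add: add_divide_distrib[symmetric] algebra_simps)
  also have "\<dots> = - t" using \<open>1 + t \<noteq> 0\<close> by simp
  finally have "- t / (1 + t) + t * (- t / (1 + t)) = - t" .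
  then show ?thesis by (auto simp: uu_def algebra_simps)
qed

lemma gm_gi:
  assumes t: "t \<noteq> -1"
  shows "gm a b t ** gi a b t = mat 1" "gi a b t ** gm a b t = mat 1"
proof -
  have r: "t + uu a b t + (if a = b then t * uu a b t else 0) = 0" using uu_rel[OF t] .
  show "gm a b t ** gi a b t = mat 1"
  proof (subst vec_eq_iff, intro allI, subst vec_eq_iff, intro allI)
    fix i j
    have "(gm a b t ** gi a b t) $ i $ j = (\<Sum>k\<in>UNIV. ge a b t i k * ((if k = j then 1 else 0) + uu a b t * (if k = a \<and> j = b then 1 else 0)))"
      by (simp add: gm_def gi_def matrix_matrix_mult_def)
    also have "\<dots> = (if i = j then 1 else 0) + (if i = a \<and> j = b then t + uu a b t + (if a = b then t * uu a b t else 0) else 0)"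
      by (simp add: ge_def algebra_simps sum.distrib if_distrib[of "\<lambda>x. x * _"] if_distrib[of "\<lambda>x. _ * x"] cong: if_cong)
    finally show "(gm a b t ** gi a b t) $ i $ j = mat 1 $ i $ j" using r by (simp add: mat_def)
  qed
  show "gi a b t ** gm a b t = mat 1"
  proof (subst vec_eq_iff, intro allI, subst vec_eq_iff, intro allI)
    fix i j
    have "(gi a b t ** gm a b t) $ i $ j = (\<Sum>k\<in>UNIV. ((if i = k then 1 else 0) + uu a b t * (if i = a \<and> k = b then 1 else 0)) * ge a b t k j)"
      by (simp add: gm_def gi_def matrix_matrix_mult_def)
    also have "\<dots> = (if i = j then 1 else 0) + (if i = a \<and> j = b then t + uu a b t + (if a = b then t * uu a b t else 0) else 0)"
      by (simp add: ge_def algebra_simps sum.distrib if_distrib[of "\<lambda>x. x * _"] if_distrib[of "\<lambda>x. _ * x"] cong: if_cong)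
    finally show "(gi a b t ** gm a b t) $ i $ j = mat 1 $ i $ j" using r by (simp add: mat_def)
  qed
qed


lemma inv_unique:
  fixes A B :: "complex^'n::finite^'n"
  assumes "A ** B = mat 1" "B ** A = mat 1"
  shows "matrix_inv A = B"
proof -
  have ex: "\<exists>A'. A ** A' = mat 1 \<and> A' ** A = mat 1" using assms by blast
  define C where "C = matrix_inv A"
  have C: "A ** C = mat 1 \<and> C ** A = mat 1"
    unfolding C_def matrix_inv_def by (rule someI_ex[OF ex])
  have "C = C ** (A ** B)" using assms by (simp add: matrix_mul_rid)
  also have "\<dots> = (C ** A) ** B" by (simp add: matrix_mul_assoc)
  also have "\<dots> = B" using C by (simp add: matrix_mul_lid)
  finally show ?thesis unfolding C_def .
qed

definition rr :: "'n \<Rightarrow> 'n \<Rightarrow> complex \<Rightarrow> 'n widx \<Rightarrow> 'n widx \<Rightarrow> complex" where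
  "rr a b t w c = (case (w, c) of
      (Inl (i, j), Inl (k, l)) \<Rightarrow> ge a b t i k * ge a b t j l
    | (Inr (i, j), Inr (k, l)) \<Rightarrow> he a b t i k * he a b t j l
    | _ \<Rightarrow> 0)"

lemma rhoW_gm: "t \<noteq> -1 \<Longrightarrow> rhoW (gm a b t) w c = rr a b t w c"
proof -
  assume t: "t \<noteq> -1"
  have mi: "matrix_inv (gm a b t) = gi a b t" using gm_gi[OF t] by (intro inv_unique)
  show ?thesis
    unfolding rhoW_def rr_def mi
    by (simp add: gm_def gi_def transpose_def he_def split: sum.splits prod.splits)
qed

definition AA :: "'n \<Rightarrow> 'n \<Rightarrow> 'n widx \<Rightarrow> 'n widx \<Rightarrow> complex" where
  "AA a b w c = (\<Sum>s\<in>UNIV. if isL w \<and> cmp w s = a \<and> c = setc w s b then 1 else 0)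
              - (\<Sum>s\<in>UNIV. if \<not> isL w \<and> cmp w s = b \<and> c = setc w s a then 1 else 0)"

lemma uu_deriv: "(uu a b has_field_derivative -1) (at 0)"
proof (cases "a = b")
  case True
  have "((\<lambda>t. - t / (1 + t)) has_field_derivative -1) (at (0::complex))"
    by (auto intro!: derivative_eq_intros)
  then show ?thesis using True unfolding uu_def by simp
next
  case False
  then show ?thesis unfolding uu_def by (auto intro!: derivative_eq_intros)
qed

lemma ge_deriv: "((\<lambda>t. ge a b t i k) has_field_derivative (if i = a \<and> k = b then 1 else 0)) (at 0)"
  unfolding ge_def by (auto intro!: derivative_eq_intros)

lemma he_deriv: "((\<lambda>t. he a b t i k) has_field_derivative - (if k = a \<and> i = b then 1 else 0)) (at 0)"
  unfolding he_def by (auto intro!: derivative_eq_intros uu_deriv)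

lemma uu0[simp]: "uu a b 0 = 0" by (simp add: uu_def)

lemma rr0: "rr a b 0 w c = (if w = c then 1 else 0)"
  by (auto simp: rr_def ge_def he_def split: sum.splits prod.splits)

lemma rr_deriv: "((\<lambda>t. rr a b t w c) has_field_derivative AA a b w c) (at 0)"
proof -
  obtain i j where w: "w = Inl (i,j) \<or> w = Inr (i,j)" by (cases w) auto
  obtain k l where c: "c = Inl (k,l) \<or> c = Inr (k,l)" by (cases c) auto
  from w c show ?thesis
  proof (elim disjE)
    assume w: "w = Inl (i,j)" and c: "c = Inl (k,l)"
    have "((\<lambda>t. ge a b t i k * ge a b t j l) has_field_derivative
        (if i = a \<and> k = b then 1 else 0) * ge a b 0 j l + (if j = a \<and> l = b then 1 else 0) * ge a b 0 i k) (at 0)"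
      by (rule DERIV_mult[OF ge_deriv ge_deriv])
    moreover have "(\<lambda>t. rr a b t w c) = (\<lambda>t. ge a b t i k * ge a b t j l)"
      by (simp add: w c rr_def)
    ultimately show ?thesis
      by (simp only:) (rule DERIV_cong, assumption, auto simp: w c AA_def ge_def UNIV_bool)
  next
    assume w: "w = Inr (i,j)" and c: "c = Inr (k,l)"
    have "((\<lambda>t. he a b t i k * he a b t j l) has_field_derivative
        (- (if k = a \<and> i = b then 1 else 0)) * he a b 0 j l + (- (if l = a \<and> j = b then 1 else 0)) * he a b 0 i k) (at 0)"
      by (rule DERIV_mult[OF he_deriv he_deriv])
    moreover have "(\<lambda>t. rr a b t w c) = (\<lambda>t. he a b t i k * he a b t j l)"
      by (simp add: w c rr_def)
    ultimately show ?thesis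
      by (simp only:) (rule DERIV_cong, assumption, auto simp: w c AA_def he_def UNIV_bool)
  qed (auto simp: rr_def AA_def UNIV_bool)
qed


lemma prod_ind:
  assumes m: "m < length bs" and cs: "length cs = length bs"
  shows "(\<Prod>m'\<in>{..<length bs}-{m}. rr a b 0 (bs!m') (cs!m')) = (if cs = bs[m := cs!m] then 1 else 0)"
proof (cases "cs = bs[m := cs!m]")
  case True
  have "\<forall>m'\<in>{..<length bs}-{m}. bs!m' = cs!m'"
    using True by (metis DiffE insertCI nth_list_update_neq)
  then show ?thesis using True by (simp add: rr0)
next
  case False
  have "\<exists>m'\<in>{..<length bs}-{m}. bs!m' \<noteq> cs!m'"
  proof (rule ccontr)
    assume "\<not> ?thesis"
    then have "cs = bs[m := cs!m]" using cs m
      by (auto simp: list_eq_iff_nth_eq nth_list_update)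
    with False show False by simp
  qed
  then have "(\<Prod>m'\<in>{..<length bs}-{m}. rr a b 0 (bs!m') (cs!m')) = 0"
    by (simp add: rr0 prod_zero_iff) 
  then show ?thesis using False by simp
qed

lemma finS: "finite {cs :: ('n::finite widx) list. length cs = n}"
  using finite_lists_length_eq[of "UNIV :: 'n widx set" n] by simp

lemma red_m:
  fixes x :: "'n::finite widx list \<Rightarrow> complex"
  assumes m: "m < length bs"
  shows "(\<Sum>cs\<in>{cs. length cs = length bs}. AA a b (bs!m) (cs!m) * (\<Prod>m'\<in>{..<length bs}-{m}. rr a b 0 (bs!m') (cs!m')) * x cs)
       = (\<Sum>c\<in>UNIV. AA a b (bs!m) c * x (bs[m := c]))"
proof -
  define f where "f = (\<lambda>c. bs[m := c])"
  have inj: "inj_on f UNIV" unfolding f_def inj_on_def using m by (metis nth_list_update_eq)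
  have sub: "f ` UNIV \<subseteq> {cs. length cs = length bs}" unfolding f_def by auto
  have "(\<Sum>cs\<in>{cs. length cs = length bs}. AA a b (bs!m) (cs!m) * (\<Prod>m'\<in>{..<length bs}-{m}. rr a b 0 (bs!m') (cs!m')) * x cs)
      = (\<Sum>cs\<in>f ` UNIV. AA a b (bs!m) (cs!m) * x cs)"
  proof (rule sum.mono_neutral_cong_right[OF finS sub])
    show "\<forall>i\<in>{cs. length cs = length bs} - range f.
       AA a b (bs ! m) (i ! m) * (\<Prod>m'\<in>{..<length bs} - {m}. rr a b 0 (bs ! m') (i ! m')) * x i = 0"
    proof
      fix cs assume cs: "cs \<in> {cs. length cs = length bs} - range f"
      then have "cs \<noteq> bs[m := cs!m]" unfolding f_def by auto
      then show "AA a b (bs ! m) (cs ! m) * (\<Prod>m'\<in>{..<length bs} - {m}. rr a b 0 (bs ! m') (cs ! m')) * x cs = 0"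
        using prod_ind[OF m, of cs] cs by simp
    qed
    fix cs assume "cs \<in> range f"
    then have "cs = bs[m := cs!m]" "length cs = length bs" unfolding f_def using m by auto
    then show "AA a b (bs ! m) (cs ! m) * (\<Prod>m'\<in>{..<length bs} - {m}. rr a b 0 (bs ! m') (cs ! m')) * x cs = AA a b (bs ! m) (cs ! m) * x cs"
      using prod_ind[OF m, of cs] by simp
  qed
  also have "\<dots> = (\<Sum>c\<in>UNIV. AA a b (bs!m) (f c ! m) * x (f c))"
    by (simp add: sum.reindex[OF inj])
  also have "\<dots> = (\<Sum>c\<in>UNIV. AA a b (bs!m) c * x (bs[m := c]))"
    unfolding f_def using m by simp
  finally show ?thesis .
qed

lemma sum_ind_mult:
  fixes f :: "'a::finite \<Rightarrow> complex"
  shows "(\<Sum>c\<in>UNIV. (if P \<and> c = v then 1 else 0) * f c) = (if P then f v else 0)"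
proof -
  have "\<And>c. (if P \<and> c = v then 1 else 0) * f c = (if v = c then (if P then f v else 0) else 0)" by auto
  then show ?thesis by simp
qed

lemma red_c:
  fixes x :: "'n::finite widx list \<Rightarrow> complex"
  shows "(\<Sum>c\<in>UNIV. AA a b w c * x (bs[m := c]))
    = (\<Sum>s\<in>UNIV. if isL w \<and> cmp w s = a then x (bs[m := setc w s b]) else 0)
    - (\<Sum>s\<in>UNIV. if \<not> isL w \<and> cmp w s = b then x (bs[m := setc w s a]) else 0)"
proof -
  have "(\<Sum>c\<in>UNIV. AA a b w c * x (bs[m := c]))
     = (\<Sum>c\<in>UNIV. \<Sum>s\<in>UNIV. (if (isL w \<and> cmp w s = a) \<and> c = setc w s b then 1 else 0) * x (bs[m := c]))
     - (\<Sum>c\<in>UNIV. \<Sum>s\<in>UNIV. (if (\<not> isL w \<and> cmp w s = b) \<and> c = setc w s a then 1 else 0) * x (bs[m := c]))"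
    unfolding AA_def by (simp add: left_diff_distrib sum_distrib_right sum_subtractf conj_assoc)
  also have "\<dots> = (\<Sum>s\<in>UNIV. \<Sum>c\<in>UNIV. (if (isL w \<and> cmp w s = a) \<and> c = setc w s b then 1 else 0) * x (bs[m := c]))
     - (\<Sum>s\<in>UNIV. \<Sum>c\<in>UNIV. (if (\<not> isL w \<and> cmp w s = b) \<and> c = setc w s a then 1 else 0) * x (bs[m := c]))"
    by (simp only: sum.swap[of _ UNIV "UNIV :: bool set"])
  also have "\<dots> = (\<Sum>s\<in>UNIV. if isL w \<and> cmp w s = a then x (bs[m := setc w s b]) else 0)
    - (\<Sum>s\<in>UNIV. if \<not> isL w \<and> cmp w s = b then x (bs[m := setc w s a]) else 0)"
    by (simp only: sum_ind_mult)
  finally show ?thesis .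
qed


lemma stepA:
  fixes x :: "'n::finite widx list \<Rightarrow> complex"
  assumes inv: "\<forall>g :: complex^'n^'n. invertible g \<longrightarrow> ext_act g x = x"
  shows "Op isL a b x bs = Op (\<lambda>w. \<not> isL w) b a x bs"
proof -
  define N where "N = length bs"
  define S where "S = {cs :: 'n widx list. length cs = N}"
  define F where "F = (\<lambda>t. \<Sum>cs\<in>S. (\<Prod>m<N. rr a b t (bs!m) (cs!m)) * x cs)"
  define D where "D = (\<Sum>cs\<in>S. (\<Sum>m<N. AA a b (bs!m) (cs!m) * (\<Prod>m'\<in>{..<N}-{m}. rr a b 0 (bs!m') (cs!m'))) * x cs)"
  have dF: "(F has_field_derivative D) (at 0)"
    unfolding F_def D_def
    by (intro DERIV_sum DERIV_cmult_right has_field_derivative_prod rr_deriv)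
  have ev: "eventually (\<lambda>t. F t = x bs) (nhds 0)"
  proof (rule eventually_mono[OF eventually_nhds_ball[of 1 "0::complex"]])
    fix t :: complex assume "t \<in> ball 0 1"
    then have t: "t \<noteq> -1" by auto
    have "invertible (gm a b t)" unfolding invertible_def using gm_gi[OF t] by blast
    then have "ext_act (gm a b t) x bs = x bs" using inv by simp
    then show "F t = x bs" unfolding F_def S_def N_def ext_act_def by (simp add: rhoW_gm[OF t])
  qed simp
  have "((\<lambda>t. x bs) has_field_derivative D) (at 0)"
    using dF DERIV_cong_ev[OF refl ev refl] by simp
  then have D0: "D = 0" using DERIV_unique DERIV_const by blast
  have "D = (\<Sum>m<N. \<Sum>cs\<in>S. AA a b (bs!m) (cs!m) * (\<Prod>m'\<in>{..<N}-{m}. rr a b 0 (bs!m') (cs!m')) * x cs)"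
    unfolding D_def by (simp add: sum_distrib_right sum.swap[of _ S])
  also have "\<dots> = (\<Sum>m<N. \<Sum>c\<in>UNIV. AA a b (bs!m) c * x (bs[m := c]))"
    unfolding S_def N_def by (intro sum.cong refl red_m) simp
  also have "\<dots> = (\<Sum>m<N. (\<Sum>s\<in>UNIV. if isL (bs!m) \<and> cmp (bs!m) s = a then x (bs[m := setc (bs!m) s b]) else 0)
    - (\<Sum>s\<in>UNIV. if \<not> isL (bs!m) \<and> cmp (bs!m) s = b then x (bs[m := setc (bs!m) s a]) else 0))"
    by (simp only: red_c)
  also have "\<dots> = Op isL a b x bs - Op (\<lambda>w. \<not> isL w) b a x bs"
    unfolding Op_def N_def by (simp add: sum_subtractf)
  finally show ?thesis using D0 by simp
qed


lemma vanish:
  fixes x :: "'n::finite widx list \<Rightarrow> complex"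
  assumes alt: "ext_alg_elem x" and inv: "\<forall>g :: complex^'n^'n. invertible g \<longrightarrow> ext_act g x = x"
    and ne: "bs \<noteq> []"
  shows "x bs = 0"
proof (rule ccontr)
  assume nz: "x bs \<noteq> 0"
  define nL where "nL = (\<lambda>w::'n widx. \<not> isL w)"
  define cL where "cL = card {m. m < length bs \<and> isL (bs!m)}"
  define cR where "cR = card {m. m < length bs \<and> nL (bs!m)}"
  have sA: "\<And>a b. Op isL a b x = Op nL b a x"
    using stepA[OF inv] unfolding nL_def by blast
  have Linv: "\<forall>w s v. isL (setc w s v) = isL w" by simp
  have Rinv: "\<forall>w s v. nL (setc w s v) = nL w" by (simp add: nL_def)
  have disj: "\<forall>w. \<not> (isL w \<and> nL w)" by (simp add: nL_def)
  have fL: "\<forall>w. isL w \<longrightarrow> flipsign w = -1" by (intro allI, case_tac w) auto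
  have fR: "\<forall>w. nL w \<longrightarrow> flipsign w = 1" by (intro allI, case_tac w) (auto simp: nL_def)
  have kL: "\<forall>w w'. isL w \<longrightarrow> isL w' \<longrightarrow> isL w = isL w'" by simp
  have kR: "\<forall>w w'. nL w \<longrightarrow> nL w' \<longrightarrow> isL w = isL w'" by (simp add: nL_def)
  have "(\<Sum>a\<in>UNIV. Op isL a a x bs) = (\<Sum>a\<in>UNIV. Op nL a a x bs)" by (simp add: sA)
  then have tr: "2 * of_nat cL * x bs = 2 * of_nat cR * x bs"
    unfolding cL_def cR_def trace .
  have "(\<Sum>a\<in>UNIV. \<Sum>b\<in>UNIV. Op isL a b (Op isL b a x) bs) = (\<Sum>a\<in>UNIV. \<Sum>b\<in>UNIV. Op isL a b (Op nL a b x) bs)"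
    by (simp add: sA)
  also have "\<dots> = (\<Sum>a\<in>UNIV. \<Sum>b\<in>UNIV. Op nL a b (Op isL a b x) bs)"
    by (simp add: commute[OF disj Linv Rinv])
  also have "\<dots> = (\<Sum>a\<in>UNIV. \<Sum>b\<in>UNIV. Op nL a b (Op nL b a x) bs)"
    by (simp add: sA)
  finally have "2 * of_nat cL * (of_nat CARD('n) + -1) * x bs = 2 * of_nat cR * (of_nat CARD('n) + 1) * x bs"
    unfolding cL_def cR_def casimir[OF Linv alt fL kL, symmetric] casimir[OF Rinv alt fR kR, symmetric] .
  with tr nz have "(of_nat cL :: complex) = of_nat cR" "(of_nat cL :: complex) * (of_nat CARD('n) - 1) = of_nat cR * (of_nat CARD('n) + 1)"
    by (auto simp: algebra_simps)
  then have "(of_nat cL :: complex) = 0" by (simp add: algebra_simps)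
  then have c0: "cL = 0" "cR = 0" using \<open>(of_nat cL :: complex) = of_nat cR\<close> by simp_all
  have "0 < length bs" using ne by simp
  show False
  proof (cases "isL (bs!0)")
    case True
    then have "0 \<in> {m. m < length bs \<and> isL (bs!m)}" using \<open>0 < length bs\<close> by simp
    then have "cL > 0" unfolding cL_def by (intro card_gt_0_iff[THEN iffD2]) auto
    then show False using c0 by simp
  next
    case False
    then have "0 \<in> {m. m < length bs \<and> nL (bs!m)}" using \<open>0 < length bs\<close> by (simp add: nL_def)
    then have "cR > 0" unfolding cR_def by (intro card_gt_0_iff[THEN iffD2]) auto
    then show False using c0 by simp
  qed
qed

theorem theorem5p3:
  fixes x :: "'n::finite widx list \<Rightarrow> complex"
  shows "(ext_alg_elem x \<and> (\<forall>g :: complex^'n^'n. invertible g \<longrightarrow> ext_act g x = x))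
         \<longleftrightarrow> (\<exists>c :: complex. x = (\<lambda>bs. c * ext_one bs))"
proof
  assume h: "ext_alg_elem x \<and> (\<forall>g :: complex^'n^'n. invertible g \<longrightarrow> ext_act g x = x)"
  have "x = (\<lambda>bs. x [] * ext_one bs)"
  proof
    fix bs show "x bs = x [] * ext_one bs"
      using vanish[of x bs] h by (cases "bs = []") (auto simp: ext_one_def)
  qed
  then show "\<exists>c :: complex. x = (\<lambda>bs. c * ext_one bs)" by blast
next
  assume "\<exists>c :: complex. x = (\<lambda>bs. c * ext_one bs)"
  then obtain c where x: "x = (\<lambda>bs. c * ext_one bs)" by blast
  have "ext_alg_elem x" unfolding ext_alg_elem_def x ext_one_def by simp
  moreover have "ext_act g x = x" for g :: "complex^'n^'n"
  proof
    fix bs :: "'n widx list"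
    show "ext_act g x bs = x bs"
    proof (cases "bs = []")
      case True
      have "{cs :: 'n widx list. length cs = length bs} = {[]}" using True by auto
      then show ?thesis using True by (simp add: ext_act_def x ext_one_def)
    next
      case False
      have "ext_act g x bs = 0"
        unfolding ext_act_def x ext_one_def using False by (auto intro!: sum.neutral)
      then show ?thesis using False by (simp add: x ext_one_def)
    qed
  qed
  ultimately show "ext_alg_elem x \<and> (\<forall>g :: complex^'n^'n. invertible g \<longrightarrow> ext_act g x = x)" by blast
qed

end
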